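(* Let the sequences of integers $(a_k)_{k\ge 0}$, $(b_k)$, $(c_k)$, $(d_k)$, $(e_k)$, $(f_k)$, $(p_k)$, $(q_k)$, $(r_k)$, $(s_k)$, $(t_k)$ be defined as the coefficients of the following power series expansions about $x=0$: \begin{align*} &\frac{x^2+164 x+3}{x^3-99 x^2+99 x-1}=\sum_{k=0}^{\infty}a_k x^k, && \frac{-5 x^2+138 x+3}{x^3-99 x^2+99 x-1}=\sum_{k=0}^{\infty}p_k x^k,\\ &\frac{-7 x^2+134 x+1}{x^3-99 x^2+99 x-1}=\sum_{k=0}^{\infty}b_k x^k, && \frac{3 x^2+244 x+1}{x^3-99 x^2+99 x-1}=\sum_{k=0}^{\infty}q_k x^k,\\ &\frac{-x^2+298 x-1}{x^3-99 x^2+99 x-1}=\sum_{k=0}^{\infty}c_k x^k, && \frac{x^2+254 x-7}{x^3-99 x^2+99 x-1}=\sum_{k=0}^{\infty}r_k x^k,\\ &\frac{-5 x^2+228 x-7}{x^3-99 x^2+99 x-1}=\sum_{k=0}^{\infty}d_k x^k, && \frac{-7 x^2+148 x-5}{x^3-99 x^2+99 x-1}=\sum_{k=0}^{\infty}s_k x^k,\\ &\frac{3 x^2+258 x-5}{x^3-99 x^2+99 x-1}=\sum_{k=0}^{\infty}e_k x^k, && \frac{3}{1-x}=\sum_{k=0}^{\infty}t_k x^k,\\ &\frac{-3 x^2+94 x-3}{x^3-99 x^2+99 x-1}=\sum_{k=0}^{\infty}f_k x^k. \end{align*} Then for every integer $j$ with $1\le j\le 5$ and every integer $k\ge 0$,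 \[ a_k^j+b_k^j+c_k^j+d_k^j+e_k^j+f_k^j-p_k^j-q_k^j-r_k^j-s_k^j-t_k^j=1. \]
   Context: The sequences are the Taylor coefficients at $x=0$ of the given rational functions (all denominators are nonzero at $x=0$), equivalently formal power series identities. *)

theory Defs
  imports "HOL-Computational_Algebra.Formal_Power_Series"
begin

text \<open>Taylor coefficients at 0 of rational functions, taken as formal power series
  over the rationals (the denominator has nonzero constant term, so division is the
  genuine power-series inverse).\<close>

definition den :: "rat fps" where
  "den = fps_X ^ 3 - 99 * fps_X ^ 2 + 99 * fps_X - 1"

definition seq_a :: "nat \<Rightarrow> rat" where
  "seq_a k = fps_nth ((fps_X ^ 2 + 164 * fps_X + 3) / den) k"
definition seq_b :: "nat \<Rightarrow> rat" where
  "seq_b k = fps_nth ((- 7 * fps_X ^ 2 + 134 * fps_X + 1) / den) k"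
definition seq_c :: "nat \<Rightarrow> rat" where
  "seq_c k = fps_nth ((- (fps_X ^ 2) + 298 * fps_X - 1) / den) k"
definition seq_d :: "nat \<Rightarrow> rat" where
  "seq_d k = fps_nth ((- 5 * fps_X ^ 2 + 228 * fps_X - 7) / den) k"
definition seq_e :: "nat \<Rightarrow> rat" where
  "seq_e k = fps_nth ((3 * fps_X ^ 2 + 258 * fps_X - 5) / den) k"
definition seq_f :: "nat \<Rightarrow> rat" where
  "seq_f k = fps_nth ((- 3 * fps_X ^ 2 + 94 * fps_X - 3) / den) k"
definition seq_p :: "nat \<Rightarrow> rat" where
  "seq_p k = fps_nth ((- 5 * fps_X ^ 2 + 138 * fps_X + 3) / den) k"
definition seq_q :: "nat \<Rightarrow> rat" where
  "seq_q k = fps_nth ((3 * fps_X ^ 2 + 244 * fps_X + 1) / den) k"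
definition seq_r :: "nat \<Rightarrow> rat" where
  "seq_r k = fps_nth ((fps_X ^ 2 + 254 * fps_X - 7) / den) k"
definition seq_s :: "nat \<Rightarrow> rat" where
  "seq_s k = fps_nth ((- 7 * fps_X ^ 2 + 148 * fps_X - 5) / den) k"
definition seq_t :: "nat \<Rightarrow> rat" where
  "seq_t k = fps_nth (3 / (1 - fps_X)) k"

end

theory Submission
  imports Defs
begin

unbundle fps_syntax

fun pq :: "nat \<Rightarrow> rat \<times> rat" where
  "pq 0 = (1, 0)"
| "pq (Suc n) = (49 * fst (pq n) + 120 * snd (pq n), 20 * fst (pq n) + 49 * snd (pq n))"

definition PP :: "nat \<Rightarrow> rat" where "PP n = fst (pq n)"
definition QQ :: "nat \<Rightarrow> rat" where "QQ n = snd (pq n)"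

lemma PP_0 [simp]: "PP 0 = 1" and QQ_0 [simp]: "QQ 0 = 0"
  and PP_Suc [simp]: "PP (Suc n) = 49 * PP n + 120 * QQ n"
  and QQ_Suc [simp]: "QQ (Suc n) = 20 * PP n + 49 * QQ n"
  by (simp_all add: PP_def QQ_def)

lemma pell: "PP n ^ 2 - 6 * QQ n ^ 2 - 1 = 0"
proof (induction n)
  case 0 then show ?case by simp
next
  case (Suc n) then show ?case by (simp add: power2_eq_square algebra_simps)
qed

lemma closed_rec:
  "\<alpha> + \<beta> * PP (n+3) + \<gamma> * QQ (n+3) = 99 * (\<alpha> + \<beta> * PP (n+2) + \<gamma> * QQ (n+2))
     - 99 * (\<alpha> + \<beta> * PP (n+1) + \<gamma> * QQ (n+1)) + (\<alpha> + \<beta> * PP n + \<gamma> * QQ n)"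
  by (simp add: numeral_eq_Suc algebra_simps)

lemma fps_numeral_mult_nth [simp]: "(numeral c * g :: rat fps) $ n = numeral c * g $ n"
  by (simp add: numeral_fps_const)

lemma den_inv: "(N / den) * den = N"
proof -
  have d0: "den $ 0 \<noteq> 0" by (simp add: den_def)
  have "(N / den) * den = N * (inverse den * den)" by (simp add: fps_divide_unit[OF d0] mult.assoc)
  also have "inverse den * den = 1" using d0 by (simp add: inverse_mult_eq_1)
  finally show ?thesis by simp
qed

lemma rec_coeff:
  fixes f N :: "rat fps"
  assumes "f * den = N"
  shows "N $ n = (if 3 \<le> n then f$(n-3) else 0) - 99*(if 2 \<le> n then f$(n-2) else 0)
     + 99*(if 1 \<le> n then f$(n-1) else 0) - f$n"
proof -
  have "N = fps_X^3 * f - fps_const 99 * (fps_X^2 * f) + fps_const 99 * (fps_X^1 * f) - f"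
    using assms by (simp add: den_def algebra_simps numeral_fps_const)
  then show ?thesis by (simp only: fps_sub_nth fps_add_nth fps_mult_left_const_nth fps_X_power_mult_nth) auto
qed

lemma closed:
  fixes N :: "rat fps"
  assumes z: "\<forall>n\<ge>3. N$n = 0" and i0: "N$0 = -(\<alpha>+\<beta>)"
   and i1: "N$1 = 99*(\<alpha>+\<beta>) - (\<alpha>+49*\<beta>+20*\<gamma>)"
   and i2: "N$2 = -99*(\<alpha>+\<beta>)+99*(\<alpha>+49*\<beta>+20*\<gamma>) - (\<alpha>+4801*\<beta>+1960*\<gamma>)"
  shows "(N/den)$n = \<alpha> + \<beta> * PP n + \<gamma> * QQ n"
proof (induction n rule: less_induct)
  case (less n)
  define f where "f = N / den"
  have R: "\<And>m. N $ m = (if 3 \<le> m then f$(m-3) else 0) - 99*(if 2 \<le> m then f$(m-2) else 0)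
     + 99*(if 1 \<le> m then f$(m-1) else 0) - f$m"
    by (rule rec_coeff) (simp add: f_def den_inv)
  consider "n = 0" | "n = 1" | "n = 2" | "n \<ge> 3" by linarith
  then show ?case
  proof cases
    case 1 then show ?thesis using R[of 0] i0 by (simp add: f_def)
  next
    case 2 then show ?thesis using R[of 1] i1 less[of 0] by (simp add: f_def)
  next
    case 3 then show ?thesis using R[of 2] i2 less[of 0] less[of 1]
      by (simp add: f_def numeral_eq_Suc)
  next
    case 4
    then obtain m where m: "n = m + 3" by (metis add.commute le_Suc_ex)
    have "f $ n = f$m - 99 * f$(m+1) + 99 * f$(m+2)"
      using R[of n] z m by simp
    also have "\<dots> = \<alpha> + \<beta> * PP n + \<gamma> * QQ n"
      using less[of m] less[of "m+1"] less[of "m+2"] closed_rec[of \<alpha> \<beta> m \<gamma>] m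
      by (simp add: f_def)
    finally show ?thesis by (simp add: f_def)
  qed
qed

lemma seq_a_closed: "seq_a k = 7/4 + (-19/4) * PP k + (-23/2) * QQ k"
  unfolding seq_a_def by (rule closed) (auto simp: fps_X_power_nth fps_numeral_nth fps_X_nth)

lemma seq_b_closed: "seq_b k = 4/3 + (-7/3) * PP k + (-6) * QQ k"
  unfolding seq_b_def by (rule closed) (auto simp: fps_X_power_nth fps_numeral_nth fps_X_nth)

lemma seq_c_closed: "seq_c k = 37/12 + (-25/12) * PP k + (-5) * QQ k"
  unfolding seq_c_def by (rule closed) (auto simp: fps_X_power_nth fps_numeral_nth fps_X_nth)

lemma seq_d_closed: "seq_d k = 9/4 + 19/4 * PP k + 23/2 * QQ k"
  unfolding seq_d_def by (rule closed) (auto simp: fps_X_power_nth fps_numeral_nth fps_X_nth)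

lemma seq_e_closed: "seq_e k = 8/3 + 7/3 * PP k + 6 * QQ k"
  unfolding seq_e_def by (rule closed) (auto simp: fps_X_power_nth fps_numeral_nth fps_X_nth)

lemma seq_f_closed: "seq_f k = 11/12 + 25/12 * PP k + 5 * QQ k"
  unfolding seq_f_def by (rule closed) (auto simp: fps_X_power_nth fps_numeral_nth fps_X_nth)

lemma seq_p_closed: "seq_p k = 17/12 + (-53/12) * PP k + (-11) * QQ k"
  unfolding seq_p_def by (rule closed) (auto simp: fps_X_power_nth fps_numeral_nth fps_X_nth)

lemma seq_q_closed: "seq_q k = 31/12 + (-43/12) * PP k + (-17/2) * QQ k"
  unfolding seq_q_def by (rule closed) (auto simp: fps_X_power_nth fps_numeral_nth fps_X_nth)

lemma seq_r_closed: "seq_r k = 31/12 + 53/12 * PP k + 11 * QQ k"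
  unfolding seq_r_def by (rule closed) (auto simp: fps_X_power_nth fps_numeral_nth fps_X_nth)

lemma seq_s_closed: "seq_s k = 17/12 + 43/12 * PP k + 17/2 * QQ k"
  unfolding seq_s_def by (rule closed) (auto simp: fps_X_power_nth fps_numeral_nth fps_X_nth)

lemma seq_t_closed: "seq_t k = 3"
proof -
  have d0: "(1 - fps_X :: rat fps) $ 0 \<noteq> 0" by simp
  have "3 / (1 - fps_X :: rat fps) = 3 * inverse (1 - fps_X)" by (simp add: fps_divide_unit[OF d0])
  also have "inverse (1 - fps_X :: rat fps) = Abs_fps (\<lambda>_. 1)"
    by (rule fps_inverse_one_minus_fps_X)
  finally show ?thesis unfolding seq_t_def by (simp add: numeral_fps_const)
qed

definition EE :: "nat \<Rightarrow> rat \<Rightarrow> rat \<Rightarrow> rat" where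
 "EE j P Q = (7/4 + (-19/4) * P + (-23/2) * Q)^j + (4/3 + (-7/3) * P + (-6) * Q)^j + (37/12 + (-25/12) * P + (-5) * Q)^j + (9/4 + 19/4 * P + 23/2 * Q)^j + (8/3 + 7/3 * P + 6 * Q)^j + (11/12 + 25/12 * P + 5 * Q)^j - (17/12 + (-53/12) * P + (-11) * Q)^j - (31/12 + (-43/12) * P + (-17/2) * Q)^j - (31/12 + 53/12 * P + 11 * Q)^j - (17/12 + 43/12 * P + 17/2 * Q)^j - 3^j"

lemma poly_id:
  fixes P Q :: rat
  assumes h: "P^2 - 6*Q^2 - 1 = 0" and j: "1 \<le> j" "j \<le> 5"
  shows "EE j P Q = 1"
proof -
  have "j = 1 \<or> j = 2 \<or> j = 3 \<or> j = 4 \<or> j = 5" using j by auto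
  moreover have "EE 1 P Q = 1" unfolding EE_def by algebra
  moreover have "EE 2 P Q = 1" unfolding EE_def by algebra
  moreover have "EE 3 P Q = 1" unfolding EE_def by algebra
  moreover have "EE 4 P Q - 1 = (P^2 - 6*Q^2 - 1) * ((-25/36) + (235/6)*Q + (150)*Q*Q + (295/18)*P + (725/6)*P*Q + (875/36)*P*P)" unfolding EE_def by algebra
  moreover have "EE 5 P Q - 1 = (P^2 - 6*Q^2 - 1) * ((-125/18) + (1175/3)*Q + (1500)*Q*Q + (1475/9)*P + (3625/3)*P*Q + (4375/18)*P*P)" unfolding EE_def by algebra
  ultimately show ?thesis using h by auto
qed

theorem theorem2p1:
  fixes j k :: nat
  assumes "1 \<le> j" and "j \<le> 5"
  shows "seq_a k ^ j + seq_b k ^ j + seq_c k ^ j + seq_d k ^ j + seq_e k ^ j + seq_f k ^ j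
         - seq_p k ^ j - seq_q k ^ j - seq_r k ^ j - seq_s k ^ j - seq_t k ^ j = 1"
proof -
  have "EE j (PP k) (QQ k) = 1" using poly_id[OF pell assms] .
  then show ?thesis
    by (simp only: EE_def seq_a_closed seq_b_closed seq_c_closed seq_d_closed seq_e_closed
      seq_f_closed seq_p_closed seq_q_closed seq_r_closed seq_s_closed seq_t_closed)
qed

end
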